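(* Let $x$ be a stable g-matching with $x\ne x^{\max}$, let $f\in F$, and let $(a,c)$ be a legal $f$-pair under $x$. Then (i) $c\in U_F^-(x)$; (ii) $x_f\prec_f x_f+\mathbf 1^a-\mathbf 1^c$; and (iii) $c$ is not interesting for $f$ under $x_f+\mathbf 1^a-\mathbf 1^c$.
   Context: Let $G=(V,E)$ be a finite bipartite graph with color classes $W$ and $F$; the edge joining $w\in W$ and $f\in F$ is written $wf$. Let $b\in\mathbb Z_+^E$ be capacities. For $v\in V$, $E_v$ is the set of edges at $v$, $\mathcal B_v=\{z\in\mathbb Z_+^{E_v}: z\le b|_{E_v}\}$, $\mathbf 1^e$ the unit vector of $e$, $|z|=\sum_e|z(e)|$, $\wedge,\vee$ componentwise min/max. Each $v$ has a choice function $C_v:\mathcal B_v\to\mathcal B_v$ with $C_v(z)\le z$ and, for all $z,z'$: (A1) $z\ge z'\ge C_v(z)\Rightarrow C_v(z')=C_v(z)$; (A2) $z\ge z'\Rightarrow C_v(z)\wedge z'\le C_v(z')$; (A3) $z\ge z'\Rightarrow|C_v(z)|\ge|C_v(z')|$. $z$ is acceptable if $C_v(z)=z$; for distinct acceptable $z,z'$, $z'\prec_v z$ iff $C_v(z\vee z')=z$. $x_v$ = restriction of $x$ to $E_v$. A g-matching is $x\in\mathbb Z_+^E$, $x\le b$, each $x_v$ acceptable; $x\prec_F y$ (distinct) iff $x_f\preceq_f y_f$ for all $f\in F$. $e\in E_v$ is interesting for $v$ under acceptable $z$ if some $z'\in\mathcal B_v$ has $z'(e)>z(e)$, $z'(e')=z(e')$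 for $e'\neq e$, $C_v(z')(e)>z(e)$; $e=wf$ is interesting for $v\in\{w,f\}$ under a g-matching $x$ if so under $x_v$, and blocks $x$ if interesting for both endpoints; stable g-matchings (no blocking edge) form a finite lattice under $\prec_F$ with maximum $x^{\max}$. For stable $x$: $U_F^+(x)$ is the set of edges $wf$ interesting for $f$ under $x$; $U_F^-(x)$ is the set of edges $wf$ with $x(wf)>0$ not interesting for $f$ under $x$. A legal $f$-pair under $x$ is $(a,c)$ with $a\in U_F^+(x)\cap E_f$, $c\in E_f\setminus\{a\}$ and $C_f(x_f+\mathbf 1^a)=x_f+\mathbf 1^a-\mathbf 1^c$. *)

theory Defs
  imports Main
begin

text \<open>Edges of the bipartite graph are pairs (w,f) with w in W and f in F.
  Vectors in Z_+^E (or Z_+^{E_v}) are functions from edges to nat, vanishing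
  outside the relevant edge set.\<close>

type_synonym ('w,'f) vec = "'w \<times> 'f \<Rightarrow> nat"

definition unitv :: "'w \<times> 'f \<Rightarrow> ('w,'f) vec" where
  "unitv e = (\<lambda>e'. if e' = e then 1 else 0)"

definition edges_at_w :: "('w \<times> 'f) set \<Rightarrow> 'w \<Rightarrow> ('w \<times> 'f) set" where
  "edges_at_w E w = {e \<in> E. fst e = w}"

definition edges_at_f :: "('w \<times> 'f) set \<Rightarrow> 'f \<Rightarrow> ('w \<times> 'f) set" where
  "edges_at_f E f = {e \<in> E. snd e = f}"

definition restr :: "('w \<times> 'f) set \<Rightarrow> ('w,'f) vec \<Rightarrow> ('w,'f) vec" where
  "restr Ev x = (\<lambda>e. if e \<in> Ev then x e else 0)"

definition inB :: "('w \<times> 'f) set \<Rightarrow> ('w,'f) vec \<Rightarrow> ('w,'f) vec \<Rightarrow> bool" where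
  "inB Ev b z \<longleftrightarrow> (\<forall>e. z e \<le> b e) \<and> (\<forall>e. e \<notin> Ev \<longrightarrow> z e = 0)"

definition vnorm :: "('w \<times> 'f) set \<Rightarrow> ('w,'f) vec \<Rightarrow> nat" where
  "vnorm Ev z = (\<Sum>e\<in>Ev. z e)"

definition vmin :: "('w,'f) vec \<Rightarrow> ('w,'f) vec \<Rightarrow> ('w,'f) vec" where
  "vmin z z' = (\<lambda>e. min (z e) (z' e))"

definition vmax :: "('w,'f) vec \<Rightarrow> ('w,'f) vec \<Rightarrow> ('w,'f) vec" where
  "vmax z z' = (\<lambda>e. max (z e) (z' e))"

definition choice_function ::
  "('w \<times> 'f) set \<Rightarrow> ('w,'f) vec \<Rightarrow> (('w,'f) vec \<Rightarrow> ('w,'f) vec) \<Rightarrow> bool" where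
  "choice_function Ev b C \<longleftrightarrow>
     (\<forall>z. inB Ev b z \<longrightarrow> inB Ev b (C z) \<and> C z \<le> z) \<and>
     (\<forall>z z'. inB Ev b z \<longrightarrow> inB Ev b z' \<longrightarrow> z \<ge> z' \<longrightarrow> z' \<ge> C z \<longrightarrow> C z' = C z) \<and>
     (\<forall>z z'. inB Ev b z \<longrightarrow> inB Ev b z' \<longrightarrow> z \<ge> z' \<longrightarrow> vmin (C z) z' \<le> C z') \<and>
     (\<forall>z z'. inB Ev b z \<longrightarrow> inB Ev b z' \<longrightarrow> z \<ge> z' \<longrightarrow> vnorm Ev (C z) \<ge> vnorm Ev (C z'))"

definition acceptable :: "(('w,'f) vec \<Rightarrow> ('w,'f) vec) \<Rightarrow> ('w,'f) vec \<Rightarrow> bool" where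
  "acceptable C z \<longleftrightarrow> C z = z"

text \<open>pref C z' z means z' \<prec>_v z (for distinct acceptable z, z')\<close>
definition pref :: "(('w,'f) vec \<Rightarrow> ('w,'f) vec) \<Rightarrow> ('w,'f) vec \<Rightarrow> ('w,'f) vec \<Rightarrow> bool" where
  "pref C z' z \<longleftrightarrow> acceptable C z \<and> acceptable C z' \<and> z \<noteq> z' \<and> C (vmax z z') = z"

definition prefeq :: "(('w,'f) vec \<Rightarrow> ('w,'f) vec) \<Rightarrow> ('w,'f) vec \<Rightarrow> ('w,'f) vec \<Rightarrow> bool" where
  "prefeq C z' z \<longleftrightarrow> z' = z \<or> pref C z' z"

definition interesting ::
  "('w \<times> 'f) set \<Rightarrow> ('w,'f) vec \<Rightarrow> (('w,'f) vec \<Rightarrow> ('w,'f) vec) \<Rightarrow> ('w,'f) vec \<Rightarrow> 'w \<times> 'f \<Rightarrow> bool" where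
  "interesting Ev b C z e \<longleftrightarrow> e \<in> Ev \<and>
     (\<exists>z'. inB Ev b z' \<and> z' e > z e \<and> (\<forall>e'. e' \<noteq> e \<longrightarrow> z' e' = z e') \<and> C z' e > z e)"

definition instance_ok ::
  "'w set \<Rightarrow> 'f set \<Rightarrow> ('w \<times> 'f) set \<Rightarrow> ('w,'f) vec \<Rightarrow>
   ('w \<Rightarrow> ('w,'f) vec \<Rightarrow> ('w,'f) vec) \<Rightarrow> ('f \<Rightarrow> ('w,'f) vec \<Rightarrow> ('w,'f) vec) \<Rightarrow> bool" where
  "instance_ok W F E b CW CF \<longleftrightarrow> finite W \<and> finite F \<and> E \<subseteq> W \<times> F \<and>
     (\<forall>w\<in>W. choice_function (edges_at_w E w) b (CW w)) \<and>
     (\<forall>f\<in>F. choice_function (edges_at_f E f) b (CF f))"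

definition g_matching ::
  "'w set \<Rightarrow> 'f set \<Rightarrow> ('w \<times> 'f) set \<Rightarrow> ('w,'f) vec \<Rightarrow>
   ('w \<Rightarrow> ('w,'f) vec \<Rightarrow> ('w,'f) vec) \<Rightarrow> ('f \<Rightarrow> ('w,'f) vec \<Rightarrow> ('w,'f) vec) \<Rightarrow> ('w,'f) vec \<Rightarrow> bool" where
  "g_matching W F E b CW CF x \<longleftrightarrow> (\<forall>e. x e \<le> b e) \<and> (\<forall>e. e \<notin> E \<longrightarrow> x e = 0) \<and>
     (\<forall>w\<in>W. acceptable (CW w) (restr (edges_at_w E w) x)) \<and>
     (\<forall>f\<in>F. acceptable (CF f) (restr (edges_at_f E f) x))"

definition blocking ::
  "('w \<times> 'f) set \<Rightarrow> ('w,'f) vec \<Rightarrow>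
   ('w \<Rightarrow> ('w,'f) vec \<Rightarrow> ('w,'f) vec) \<Rightarrow> ('f \<Rightarrow> ('w,'f) vec \<Rightarrow> ('w,'f) vec) \<Rightarrow> ('w,'f) vec \<Rightarrow> 'w \<times> 'f \<Rightarrow> bool" where
  "blocking E b CW CF x e \<longleftrightarrow> e \<in> E \<and>
     interesting (edges_at_w E (fst e)) b (CW (fst e)) (restr (edges_at_w E (fst e)) x) e \<and>
     interesting (edges_at_f E (snd e)) b (CF (snd e)) (restr (edges_at_f E (snd e)) x) e"

definition stable ::
  "'w set \<Rightarrow> 'f set \<Rightarrow> ('w \<times> 'f) set \<Rightarrow> ('w,'f) vec \<Rightarrow>
   ('w \<Rightarrow> ('w,'f) vec \<Rightarrow> ('w,'f) vec) \<Rightarrow> ('f \<Rightarrow> ('w,'f) vec \<Rightarrow> ('w,'f) vec) \<Rightarrow> ('w,'f) vec \<Rightarrow> bool" where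
  "stable W F E b CW CF x \<longleftrightarrow> g_matching W F E b CW CF x \<and> (\<forall>e. \<not> blocking E b CW CF x e)"

definition prefF ::
  "'f set \<Rightarrow> ('w \<times> 'f) set \<Rightarrow> ('f \<Rightarrow> ('w,'f) vec \<Rightarrow> ('w,'f) vec) \<Rightarrow> ('w,'f) vec \<Rightarrow> ('w,'f) vec \<Rightarrow> bool" where
  "prefF F E CF x y \<longleftrightarrow> x \<noteq> y \<and>
     (\<forall>f\<in>F. prefeq (CF f) (restr (edges_at_f E f) x) (restr (edges_at_f E f) y))"

definition is_max_stable ::
  "'w set \<Rightarrow> 'f set \<Rightarrow> ('w \<times> 'f) set \<Rightarrow> ('w,'f) vec \<Rightarrow>
   ('w \<Rightarrow> ('w,'f) vec \<Rightarrow> ('w,'f) vec) \<Rightarrow> ('f \<Rightarrow> ('w,'f) vec \<Rightarrow> ('w,'f) vec) \<Rightarrow> ('w,'f) vec \<Rightarrow> bool" where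
  "is_max_stable W F E b CW CF xmax \<longleftrightarrow> stable W F E b CW CF xmax \<and>
     (\<forall>y. stable W F E b CW CF y \<longrightarrow> y = xmax \<or> prefF F E CF y xmax)"

definition UFplus ::
  "('w \<times> 'f) set \<Rightarrow> ('w,'f) vec \<Rightarrow> ('f \<Rightarrow> ('w,'f) vec \<Rightarrow> ('w,'f) vec) \<Rightarrow> ('w,'f) vec \<Rightarrow> ('w \<times> 'f) set" where
  "UFplus E b CF x = {e \<in> E. interesting (edges_at_f E (snd e)) b (CF (snd e)) (restr (edges_at_f E (snd e)) x) e}"

definition UFminus ::
  "('w \<times> 'f) set \<Rightarrow> ('w,'f) vec \<Rightarrow> ('f \<Rightarrow> ('w,'f) vec \<Rightarrow> ('w,'f) vec) \<Rightarrow> ('w,'f) vec \<Rightarrow> ('w \<times> 'f) set" where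
  "UFminus E b CF x = {e \<in> E. x e > 0 \<and>
     \<not> interesting (edges_at_f E (snd e)) b (CF (snd e)) (restr (edges_at_f E (snd e)) x) e}"

text \<open>(a,c) is a legal f-pair under x. The identity C_f(x_f+1^a) = x_f+1^a-1^c
  (over the integers) is written without subtraction as C_f(x_f+1^a) + 1^c = x_f + 1^a.\<close>
definition legal_pair ::
  "('w \<times> 'f) set \<Rightarrow> ('w,'f) vec \<Rightarrow> ('f \<Rightarrow> ('w,'f) vec \<Rightarrow> ('w,'f) vec) \<Rightarrow> ('w,'f) vec \<Rightarrow> 'f \<Rightarrow>
   'w \<times> 'f \<Rightarrow> 'w \<times> 'f \<Rightarrow> bool" where
  "legal_pair E b CF x f a c \<longleftrightarrow>
     a \<in> UFplus E b CF x \<inter> edges_at_f E f \<and> c \<in> edges_at_f E f - {a} \<and>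
     (\<lambda>e. CF f (\<lambda>e'. restr (edges_at_f E f) x e' + unitv a e') e + unitv c e)
       = (\<lambda>e. restr (edges_at_f E f) x e + unitv a e)"

end

theory Submission
  imports Defs
begin

lemma sum_le_strict_aux:
  fixes D Y :: "'a \<Rightarrow> nat"
  assumes "finite S" "\<forall>e\<in>S. D e \<le> Y e" "sum Y S \<le> sum D S" "e \<in> S"
  shows "D e = Y e"
proof (rule ccontr)
  assume "D e \<noteq> Y e"
  with assms have "D e < Y e" by auto
  with assms have "sum D S < sum Y S"
    by (intro sum_strict_mono_ex1) auto
  with assms show False by simp
qed

theorem lemma3p2:
  fixes W :: "'w set" and F :: "'f set" and E :: "('w \<times> 'f) set" and b :: "('w,'f) vec"
    and CW :: "'w \<Rightarrow> ('w,'f) vec \<Rightarrow> ('w,'f) vec" and CF :: "'f \<Rightarrow> ('w,'f) vec \<Rightarrow> ('w,'f) vec"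
    and x xmax :: "('w,'f) vec" and f :: 'f and a c :: "'w \<times> 'f"
  assumes inst: "instance_ok W F E b CW CF"
    and xmax: "is_max_stable W F E b CW CF xmax"
    and stab: "stable W F E b CW CF x"
    and neq: "x \<noteq> xmax"
    and fF: "f \<in> F"
    and legal: "legal_pair E b CF x f a c"
  defines "y \<equiv> (\<lambda>e. restr (edges_at_f E f) x e + unitv a e - unitv c e)"
  shows "c \<in> UFminus E b CF x \<and>
         pref (CF f) (restr (edges_at_f E f) x) y \<and>
         \<not> interesting (edges_at_f E f) b (CF f) y c"
proof -
  define Ef where "Ef = edges_at_f E f"
  define C where "C = CF f"
  define xf where "xf = restr Ef x"
  define z where "z = (\<lambda>e. xf e + unitv a e)"
  have finE: "finite E" using inst unfolding instance_ok_def
    by (meson finite_SigmaI finite_subset)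
  have finEf: "finite Ef" unfolding Ef_def edges_at_f_def using finE by simp
  have cf: "choice_function Ef b C" using inst fF unfolding instance_ok_def Ef_def C_def by blast
  have CB: "\<And>v. inB Ef b v \<Longrightarrow> inB Ef b (C v) \<and> C v \<le> v" using cf unfolding choice_function_def by blast
  have A1: "\<And>v v'. inB Ef b v \<Longrightarrow> inB Ef b v' \<Longrightarrow> v \<ge> v' \<Longrightarrow> v' \<ge> C v \<Longrightarrow> C v' = C v"
    using cf unfolding choice_function_def by blast
  have A2: "\<And>v v'. inB Ef b v \<Longrightarrow> inB Ef b v' \<Longrightarrow> v \<ge> v' \<Longrightarrow> vmin (C v) v' \<le> C v'"
    using cf unfolding choice_function_def by blast
  have A3: "\<And>v v'. inB Ef b v \<Longrightarrow> inB Ef b v' \<Longrightarrow> v \<ge> v' \<Longrightarrow> vnorm Ef (C v) \<ge> vnorm Ef (C v')"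
    using cf unfolding choice_function_def by blast
  have gm: "g_matching W F E b CW CF x" using stab unfolding stable_def by blast
  have accx: "C xf = xf" using gm fF unfolding g_matching_def acceptable_def C_def xf_def Ef_def by blast
  have xB: "inB Ef b xf" using gm unfolding g_matching_def inB_def xf_def restr_def by auto
  have aEf: "a \<in> Ef" and cEf: "c \<in> Ef" and ca: "c \<noteq> a" and cE: "c \<in> E"
    using legal unfolding legal_pair_def Ef_def edges_at_f_def by auto
  have aint: "interesting Ef b C xf a"
    using legal unfolding legal_pair_def UFplus_def Ef_def edges_at_f_def C_def xf_def by auto
  have Cz: "\<And>e. C z e + unitv c e = z e"
    using legal unfolding legal_pair_def z_def C_def xf_def Ef_def by metis
  have zB: "inB Ef b z"
  proof -
    obtain z' where z': "inB Ef b z'" "z' a > xf a" "\<forall>e'. e' \<noteq> a \<longrightarrow> z' e' = xf e'"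
      using aint unfolding interesting_def by blast
    have "xf a + 1 \<le> b a" using z' unfolding inB_def by (metis Suc_eq_plus1 Suc_leI order_trans)
    then show ?thesis using xB aEf unfolding inB_def z_def unitv_def by auto
  qed
  have yC: "y = C z"
    unfolding y_def by (rule ext, metis Cz add_diff_cancel_right' z_def xf_def Ef_def)
  have xfc: "xf c \<ge> 1" using Cz[of c] ca unfolding z_def unitv_def by simp
  have ye: "\<And>e. y e + unitv c e = xf e + unitv a e" using Cz yC z_def by simp
  have yle: "y \<le> z" using CB[OF zB] yC by simp
  have yB: "inB Ef b y" using CB[OF zB] yC by simp
  have sumu: "\<And>d. d \<in> Ef \<Longrightarrow> sum (unitv d) Ef = 1"
    using finEf unfolding unitv_def by (simp add: sum.delta')
  have normy: "vnorm Ef y = vnorm Ef xf"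
  proof -
    have "sum (\<lambda>e. y e + unitv c e) Ef = sum (\<lambda>e. xf e + unitv a e) Ef" using ye by simp
    then show ?thesis unfolding vnorm_def sum.distrib using sumu[OF aEf] sumu[OF cEf] by simp
  qed
  have accy: "C y = y" using A1[OF zB yB yle] yC by simp
  have part2: "pref C xf y"
  proof -
    have "y a = xf a + 1" using ye[of a] ca unfolding unitv_def by simp
    hence "y \<noteq> xf" by (metis n_not_Suc_n Suc_eq_plus1)
    moreover have "vmax y xf = z"
      unfolding vmax_def z_def
    proof (rule ext)
      fix e
      show "max (y e) (xf e) = xf e + unitv a e"
      proof (cases "e = a")
        case True then show ?thesis using ye[of e] ca unfolding unitv_def by simp
      next
        case False then show ?thesis using ye[of e] unfolding unitv_def by (cases "e = c") auto
      qed
    qed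
    ultimately show ?thesis unfolding pref_def acceptable_def using accy accx yC by simp
  qed
  have part3: "\<not> interesting Ef b C y c"
  proof
    assume "interesting Ef b C y c"
    then obtain z' where z': "inB Ef b z'" "z' c > y c" "\<forall>e'. e' \<noteq> c \<longrightarrow> z' e' = y e'" "C z' c > y c"
      unfolding interesting_def by blast
    have yz: "\<And>e. e \<noteq> c \<Longrightarrow> y e = z e" using ye unfolding z_def unitv_def by (metis add.right_neutral)
    have zc: "z c = y c + 1" using ye[of c] ca unfolding z_def unitv_def by simp
    have "z' \<ge> z" unfolding le_fun_def using z' yz zc by (metis Suc_eq_plus1 Suc_leI order_refl)
    from A2[OF z'(1) zB this] have "min (C z' c) (z c) \<le> C z c" unfolding vmin_def le_fun_def by blast
    with yC zc z'(4) show False by simp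
  qed
  have cnotint: "\<not> interesting Ef b C xf c"
  proof
    assume "interesting Ef b C xf c"
    then obtain z'' where z'': "inB Ef b z''" "z'' c > xf c" "\<forall>e'. e' \<noteq> c \<longrightarrow> z'' e' = xf e'" "C z'' c > xf c"
      unfolding interesting_def by blast
    define u where "u = vmax z z''"
    have uB: "inB Ef b u" using zB z''(1) unfolding u_def inB_def vmax_def by simp
    have uz: "u \<ge> z" and uz'': "u \<ge> z''" unfolding u_def vmax_def le_fun_def by auto
    have z''x: "z'' \<ge> xf" unfolding le_fun_def using z'' by (metis less_imp_le order_refl)
    define D where "D = C u"
    have DB: "D \<le> u" using CB[OF uB] D_def by simp
    have h2: "vmin D z \<le> y" using A2[OF uB zB uz] yC D_def by simp
    have m2: "\<And>e. min (D e) (z e) \<le> y e" using le_funD[OF h2] unfolding vmin_def by simp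
    have zc: "z c = y c + 1" using ye[of c] ca unfolding z_def unitv_def by simp
    have Dy: "\<And>e. D e \<le> y e"
    proof -
      fix e
      show "D e \<le> y e"
      proof (cases "e = c")
        case True
        then show ?thesis using m2[of e] zc by (metis min_def add_le_same_cancel1 not_one_le_zero nat_le_linear)
      next
        case False
        have "z'' e = xf e" using z''(3) False by blast
        hence "z'' e \<le> z e" unfolding z_def by simp
        hence "u e = z e" unfolding u_def vmax_def by simp
        then show ?thesis using m2[of e] DB unfolding le_fun_def by (metis min.absorb1)
      qed
    qed
    have n1: "vnorm Ef D \<ge> vnorm Ef (C z'')" using A3[OF uB z''(1) uz''] D_def by simp
    have n2: "vnorm Ef (C z'') \<ge> vnorm Ef xf" using A3[OF z''(1) xB z''x] accx by simp
    have Deq: "\<And>e. e \<in> Ef \<Longrightarrow> D e = y e"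
      using sum_le_strict_aux[OF finEf, of D y] Dy n1 n2 normy unfolding vnorm_def by simp
    have h3: "vmin D z'' \<le> C z''" using A2[OF uB z''(1) uz''] D_def by simp
    have m3: "\<And>e. min (D e) (z'' e) \<le> C z'' e" using le_funD[OF h3] unfolding vmin_def by simp
    have lb: "\<And>e. e \<in> Ef \<Longrightarrow> xf e + unitv c e \<le> C z'' e"
    proof -
      fix e assume eE: "e \<in> Ef"
      show "xf e + unitv c e \<le> C z'' e"
      proof (cases "e = c")
        case True then show ?thesis using z''(4) unfolding unitv_def by simp
      next
        case False
        have "y e \<ge> xf e" using ye[of e] False unfolding unitv_def by simp
        moreover have "z'' e = xf e" using z''(3) False by blast
        ultimately have "min (D e) (z'' e) = xf e" using Deq[OF eE] by simp
        then show ?thesis using m3[of e] False unfolding unitv_def by simp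
      qed
    qed
    have "sum (\<lambda>e. xf e + unitv c e) Ef \<le> sum (C z'') Ef" using lb by (intro sum_mono) auto
    hence "vnorm Ef xf + 1 \<le> vnorm Ef (C z'')" unfolding vnorm_def sum.distrib using sumu[OF cEf] by simp
    moreover have "vnorm Ef D \<le> vnorm Ef y" unfolding vnorm_def using Dy by (intro sum_mono) auto
    ultimately show False using n1 normy by simp
  qed
  have part1: "c \<in> UFminus E b CF x"
  proof -
    have "x c = xf c" using cEf unfolding xf_def restr_def by simp
    moreover have "snd c = f" using cEf unfolding Ef_def edges_at_f_def by simp
    ultimately show ?thesis unfolding UFminus_def using cE xfc cnotint
      unfolding Ef_def C_def xf_def by simp
  qed
  show ?thesis using part1 part2 part3 unfolding Ef_def C_def xf_def by simp
qed

end
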